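(* Let $G$ be a non-complete double-critical $k$-chromatic graph. For any vertex $x$ of $G$ that is not adjacent to all the other vertices of $G$, $\chi(G_x)\le k-3$.
   Context: All graphs are finite and simple. A graph $G$ is (vertex-)critical if $\chi(G-v)<\chi(G)$ for every vertex $v\in V(G)$. A critical graph $G$ is double-critical if $\chi(G-x-y)\le\chi(G)-2$ for every edge $xy\in E(G)$. For a vertex $x$, $G_x:=G[N(x)]$ denotes the subgraph induced by the neighbourhood of $x$. *)

theory Defs
  imports Main
begin

definition simple_graph :: "'a set \<Rightarrow> ('a \<Rightarrow> 'a \<Rightarrow> bool) \<Rightarrow> bool" where
  "simple_graph V E \<longleftrightarrow> finite V \<and>
     (\<forall>x y. E x y \<longrightarrow> x \<in> V \<and> y \<in> V \<and> x \<noteq> y \<and> E y x)"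

definition induced :: "('a \<Rightarrow> 'a \<Rightarrow> bool) \<Rightarrow> 'a set \<Rightarrow> ('a \<Rightarrow> 'a \<Rightarrow> bool)" where
  "induced E S = (\<lambda>x y. E x y \<and> x \<in> S \<and> y \<in> S)"

definition proper_colouring :: "'a set \<Rightarrow> ('a \<Rightarrow> 'a \<Rightarrow> bool) \<Rightarrow> nat \<Rightarrow> ('a \<Rightarrow> nat) \<Rightarrow> bool" where
  "proper_colouring V E k c \<longleftrightarrow> (\<forall>v\<in>V. c v < k) \<and> (\<forall>x\<in>V. \<forall>y\<in>V. E x y \<longrightarrow> c x \<noteq> c y)"

definition colourable :: "'a set \<Rightarrow> ('a \<Rightarrow> 'a \<Rightarrow> bool) \<Rightarrow> nat \<Rightarrow> bool" where
  "colourable V E k \<longleftrightarrow> (\<exists>c. proper_colouring V E k c)"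

definition chromatic_number :: "'a set \<Rightarrow> ('a \<Rightarrow> 'a \<Rightarrow> bool) \<Rightarrow> nat" where
  "chromatic_number V E = (LEAST k. colourable V E k)"

definition del_chi :: "'a set \<Rightarrow> ('a \<Rightarrow> 'a \<Rightarrow> bool) \<Rightarrow> 'a set \<Rightarrow> nat" where
  "del_chi V E S = chromatic_number (V - S) (induced E (V - S))"

definition vertex_critical :: "'a set \<Rightarrow> ('a \<Rightarrow> 'a \<Rightarrow> bool) \<Rightarrow> bool" where
  "vertex_critical V E \<longleftrightarrow>
     (\<forall>v\<in>V. del_chi V E {v} < chromatic_number V E)"

definition double_critical :: "'a set \<Rightarrow> ('a \<Rightarrow> 'a \<Rightarrow> bool) \<Rightarrow> bool" where
  "double_critical V E \<longleftrightarrow> vertex_critical V E \<and>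
     (\<forall>x y. E x y \<longrightarrow> int (del_chi V E {x, y}) \<le> int (chromatic_number V E) - 2)"

definition neighbourhood :: "('a \<Rightarrow> 'a \<Rightarrow> bool) \<Rightarrow> 'a \<Rightarrow> 'a set" where
  "neighbourhood E x = {y. E x y}"

definition complete_graph :: "'a set \<Rightarrow> ('a \<Rightarrow> 'a \<Rightarrow> bool) \<Rightarrow> bool" where
  "complete_graph V E \<longleftrightarrow> (\<forall>x\<in>V. \<forall>y\<in>V. x \<noteq> y \<longrightarrow> E x y)"

end

theory Submission
  imports Defs
begin

lemma colourable_ex:
  assumes "finite S" "\<And>a. \<not> E a a"
  shows "\<exists>m. colourable S E m"
proof -
  obtain f :: "'a \<Rightarrow> nat" and n where f: "f ` S = {i. i < n}" "inj_on f S"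
    using finite_imp_inj_to_nat_seg[OF assms(1)] by blast
  have "proper_colouring S E n f"
    unfolding proper_colouring_def using f assms(2)
    by (auto dest: inj_onD)
  thus ?thesis unfolding colourable_def by blast
qed

lemma chi_colourable:
  assumes "finite S" "\<And>a. \<not> E a a"
  shows "colourable S E (chromatic_number S E)"
  unfolding chromatic_number_def using colourable_ex[OF assms] by (rule LeastI_ex)

lemma chi_le: "colourable S E m \<Longrightarrow> chromatic_number S E \<le> m"
  unfolding chromatic_number_def by (rule Least_le)

theorem proposition13:
  fixes V :: "'a set" and E :: "'a \<Rightarrow> 'a \<Rightarrow> bool" and k :: nat and x :: 'a
  assumes "simple_graph V E"
    and "\<not> complete_graph V E"
    and "double_critical V E"
    and "chromatic_number V E = k"
    and "x \<in> V"
    and "\<exists>y\<in>V. y \<noteq> x \<and> \<not> E x y"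
  shows "int (chromatic_number (neighbourhood E x) (induced E (neighbourhood E x))) \<le> int k - 3"
proof -
  have fin: "finite V" and sym: "\<And>a b. E a b \<Longrightarrow> a \<in> V \<and> b \<in> V \<and> a \<noteq> b \<and> E b a"
    using assms(1) unfolding simple_graph_def by auto
  have irr: "\<And>S a. \<not> induced E S a a" unfolding induced_def using sym by blast
  have delcol: "\<And>S. colourable (V - S) (induced E (V - S)) (del_chi V E S)"
  proof -
    fix S
    show "colourable (V - S) (induced E (V - S)) (del_chi V E S)"
      unfolding del_chi_def by (rule chi_colourable) (use fin irr in auto)
  qed
  have vc: "\<And>v. v \<in> V \<Longrightarrow> del_chi V E {v} < k"
    using assms(3,4) unfolding double_critical_def vertex_critical_def by blast
  have dc: "\<And>a b. E a b \<Longrightarrow> int (del_chi V E {a, b}) \<le> int k - 2"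
    using assms(3,4) unfolding double_critical_def by blast
  obtain z where z: "z \<in> V" "z \<noteq> x" "\<not> E x z" using assms(6) by blast
  have nzx: "\<not> E z x" using z sym by blast
  show ?thesis
  proof (cases "\<exists>w. E z w \<and> \<not> E x w")
    case True
    then obtain w where w: "E z w" "\<not> E x w" by blast
    have wx: "w \<noteq> x" using w nzx by blast
    define d where "d = del_chi V E {z, w}"
    obtain c where c: "proper_colouring (V - {z, w}) (induced E (V - {z, w})) d c"
      using delcol[of "{z,w}"] unfolding colourable_def d_def by blast
    have xin: "x \<in> V - {z, w}" using assms(5) z wx by blast
    have cx: "c x < d" using c xin unfolding proper_colouring_def by blast
    have Nsub: "neighbourhood E x \<subseteq> V - {z, w}"
      unfolding neighbourhood_def using sym z w by blast
    define c' where "c' = (\<lambda>v. if c v < c x then c v else c v - 1)"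
    have "proper_colouring (neighbourhood E x) (induced E (neighbourhood E x)) (d - 1) c'"
      unfolding proper_colouring_def
    proof (intro conjI ballI impI)
      fix v assume v: "v \<in> neighbourhood E x"
      hence "v \<in> V - {z,w}" "E x v" using Nsub unfolding neighbourhood_def by auto
      hence "c v < d" "c v \<noteq> c x" using c xin unfolding proper_colouring_def induced_def
        by (blast, metis)
      thus "c' v < d - 1" unfolding c'_def using cx by auto
    next
      fix a b assume a: "a \<in> neighbourhood E x" and b: "b \<in> neighbourhood E x"
        and ab: "induced E (neighbourhood E x) a b"
      have ain: "a \<in> V - {z,w}" "E x a" using a Nsub unfolding neighbourhood_def by auto
      have bin: "b \<in> V - {z,w}" "E x b" using b Nsub unfolding neighbourhood_def by auto
      have "c a \<noteq> c b" "c a \<noteq> c x" "c b \<noteq> c x"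
        using c ain bin xin ab unfolding proper_colouring_def induced_def by (auto, metis+)
      thus "c' a \<noteq> c' b" unfolding c'_def by auto
    qed
    hence "chromatic_number (neighbourhood E x) (induced E (neighbourhood E x)) \<le> d - 1"
      using chi_le unfolding colourable_def by blast
    moreover have "int d \<le> int k - 2" using dc[OF w(1)] d_def by simp
    ultimately show ?thesis using cx by linarith
  next
    case False
    hence allN: "\<And>w. E z w \<Longrightarrow> E x w" by blast
    show ?thesis
    proof (cases "\<exists>y. E z y")
      case True
      then obtain y where y: "E z y" by blast
      have xy: "E x y" using allN y by blast
      have yx: "y \<noteq> x" using sym xy by blast
      define d where "d = del_chi V E {y, z}"
      obtain c where c: "proper_colouring (V - {y, z}) (induced E (V - {y, z})) d c"
        using delcol[of "{y,z}"] unfolding colourable_def d_def by blast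
      have xin: "x \<in> V - {y, z}" using assms(5) z yx by blast
      have cx: "c x < d" using c xin unfolding proper_colouring_def by blast
      define c' where "c' = (\<lambda>v. if v = y then d else if v = z then c x else c v)"
      have yz: "y \<noteq> z" using sym y by blast
      have "proper_colouring V E (d + 1) c'"
        unfolding proper_colouring_def
      proof (intro conjI ballI impI)
        fix v assume "v \<in> V"
        thus "c' v < d + 1" unfolding c'_def using c cx unfolding proper_colouring_def
          by (auto simp: less_Suc_eq)
      next
        fix a b assume a: "a \<in> V" and b: "b \<in> V" and ab: "E a b"
        have ba: "E b a" using sym ab by blast
        have gen: "c p \<noteq> c q" if "p \<in> V - {y,z}" "q \<in> V - {y,z}" "E p q" for p q
          using c that unfolding proper_colouring_def induced_def by auto
        have lt: "c p < d" if "p \<in> V - {y,z}" for p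
          using c that unfolding proper_colouring_def by auto
        show "c' a \<noteq> c' b"
        proof -
          consider "a = y" | "a = z" | "a \<noteq> y \<and> a \<noteq> z" by blast
          then show ?thesis
          proof cases
            case 1
            then have "b \<noteq> y" using sym ab by blast
            then show ?thesis unfolding c'_def using 1 yz cx lt[of b] b by auto
          next
            case 2
            then have "E x b" using allN ab by blast
            moreover have "b \<noteq> z" using sym ab 2 by blast
            ultimately show ?thesis unfolding c'_def using 2 yz gen[of x b] xin b cx by auto
          next
            case 3
            show ?thesis
            proof -
              consider "b = y" | "b = z" | "b \<noteq> y \<and> b \<noteq> z" by blast
              then show ?thesis
              proof cases
                case 1 then show ?thesis unfolding c'_def using 3 lt[of a] a by auto
              next
                case 2
                then have "E x a" using allN ba by blast
                then show ?thesis unfolding c'_def using 2 3 gen[of x a] xin a yz by auto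
              next
                case 4: 3
                then show ?thesis unfolding c'_def using 3 gen[of a b] a b ab by auto
              qed
            qed
          qed
        qed
      qed
      hence "k \<le> d + 1" using chi_le assms(4) unfolding colourable_def by blast
      moreover have "int d \<le> int k - 2" using dc[of y z] sym y d_def by blast
      ultimately show ?thesis by linarith
    next
      case False
      define d where "d = del_chi V E {z}"
      obtain c where c: "proper_colouring (V - {z}) (induced E (V - {z})) d c"
        using delcol[of "{z}"] unfolding colourable_def d_def by blast
      have xin: "x \<in> V - {z}" using assms(5) z by blast
      have cx: "c x < d" using c xin unfolding proper_colouring_def by blast
      define c' where "c' = (\<lambda>v. if v = z then 0 else c v)"
      have "proper_colouring V E d c'"
        unfolding proper_colouring_def c'_def
        using c cx False sym unfolding proper_colouring_def induced_def by auto
      hence "k \<le> d" using chi_le assms(4) unfolding colourable_def by blast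
      moreover have "d < k" using vc z(1) d_def by simp
      ultimately show ?thesis by simp
    qed
  qed
qed

end
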